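(* If $\Gamma_G$ is population monotonic, then $G$ has no induced subgraph isomorphic to the path $P_5$ (five vertices, four edges forming a path) and no induced subgraph isomorphic to the cycle $C_5$.
   Context: $G=(V,E;w)$ is a finite simple graph with edge weights $w:E\to\mathbb{R}$, $w_e>0$ for all $e\in E$. The matching game on $G$ is the cooperative game $\Gamma_G=(N,\gamma)$ with player set $N=V$ and, for $S\subseteq N$, $\gamma(S)$ equal to the maximum weight of a matching in the induced subgraph $G[S]$ (so $\gamma(\emptyset)=0$). A population monotonic allocation scheme (PMAS) is a family $(\boldsymbol{x}_S)_{\emptyset\neq S\subseteq N}$ with $\boldsymbol{x}_S=(x_{S,i})_{i\in S}\in\mathbb{R}^S$ such that (efficiency) $\sum_{i\in S}x_{S,i}=\gamma(S)$ for every nonempty $S\subseteq N$, and (monotonicity) $x_{S,i}\le x_{T,i}$ whenever $\emptyset\ne S\subseteq T\subseteq N$ and $i\in S$. $\Gamma_G$ is called population monotonic if it admits a PMAS. *)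

theory Defs
  imports Complex_Main
begin

definition simple_graph :: "'a set \<Rightarrow> 'a set set \<Rightarrow> bool" where
  "simple_graph V E \<longleftrightarrow> finite V \<and> (\<forall>e\<in>E. \<exists>u v. e = {u, v} \<and> u \<noteq> v \<and> u \<in> V \<and> v \<in> V)"

definition matching_in :: "'a set set \<Rightarrow> 'a set \<Rightarrow> 'a set set \<Rightarrow> bool" where
  "matching_in E S M \<longleftrightarrow> M \<subseteq> E \<and> (\<forall>e\<in>M. e \<subseteq> S) \<and>
     (\<forall>e\<in>M. \<forall>f\<in>M. e \<noteq> f \<longrightarrow> e \<inter> f = {})"

definition gamma :: "'a set set \<Rightarrow> ('a set \<Rightarrow> real) \<Rightarrow> 'a set \<Rightarrow> real" where
  "gamma E w S = Max {sum w M | M. matching_in E S M}"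

definition is_PMAS :: "'a set \<Rightarrow> 'a set set \<Rightarrow> ('a set \<Rightarrow> real) \<Rightarrow> ('a set \<Rightarrow> 'a \<Rightarrow> real) \<Rightarrow> bool" where
  "is_PMAS V E w x \<longleftrightarrow>
     (\<forall>S. S \<subseteq> V \<and> S \<noteq> {} \<longrightarrow> (\<Sum>i\<in>S. x S i) = gamma E w S) \<and>
     (\<forall>S T i. S \<noteq> {} \<and> S \<subseteq> T \<and> T \<subseteq> V \<and> i \<in> S \<longrightarrow> x S i \<le> x T i)"

definition population_monotonic :: "'a set \<Rightarrow> 'a set set \<Rightarrow> ('a set \<Rightarrow> real) \<Rightarrow> bool" where
  "population_monotonic V E w \<longleftrightarrow> (\<exists>x. is_PMAS V E w x)"

definition has_induced_copy :: "'a set \<Rightarrow> 'a set set \<Rightarrow> 'b set \<Rightarrow> 'b set set \<Rightarrow> bool" where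
  "has_induced_copy V E VH EH \<longleftrightarrow>
     (\<exists>f. inj_on f VH \<and> f ` VH \<subseteq> V \<and>
          (\<forall>u\<in>VH. \<forall>v\<in>VH. {f u, f v} \<in> E \<longleftrightarrow> {u, v} \<in> EH))"

definition P5_edges :: "nat set set" where
  "P5_edges = {{0,1},{1,2},{2,3},{3,4}}"

definition C5_edges :: "nat set set" where
  "C5_edges = {{0,1},{1,2},{2,3},{3,4},{4,0}}"

end

theory Submission
  imports Defs
begin

lemma finE: "simple_graph V E \<Longrightarrow> finite E"
proof -
  assume sg: "simple_graph V E"
  have "E \<subseteq> Pow V"
  proof
    fix e assume "e \<in> E"
    then obtain u v where "e = {u,v}" "u \<in> V" "v \<in> V" using sg unfolding simple_graph_def by meson
    thus "e \<in> Pow V" by simp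
  qed
  moreover have "finite V" using sg unfolding simple_graph_def by blast
  ultimately show ?thesis by (meson finite_Pow_iff rev_finite_subset)
qed

lemma gamma_fin: "finite E \<Longrightarrow> finite {sum w M | M. matching_in E S M}"
proof -
  assume "finite E"
  have "{sum w M | M. matching_in E S M} \<subseteq> (sum w) ` Pow E"
    unfolding matching_in_def by blast
  thus ?thesis using \<open>finite E\<close> by (meson finite_Pow_iff finite_imageI rev_finite_subset)
qed

lemma gamma_ge: "finite E \<Longrightarrow> matching_in E S M \<Longrightarrow> sum w M \<le> gamma E w S"
  unfolding gamma_def by (rule Max_ge) (auto intro: gamma_fin)

lemma gamma_nonneg: "finite E \<Longrightarrow> 0 \<le> gamma E w S"
  using gamma_ge[of E S "{}" w] by (simp add: matching_in_def)

lemma gamma_le: "finite E \<Longrightarrow> (\<And>M. matching_in E S M \<Longrightarrow> sum w M \<le> c) \<Longrightarrow> gamma E w S \<le> c"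
  unfolding gamma_def
  apply (subst Max_le_iff)
    apply (auto intro: gamma_fin)
  apply (rule exI[of _ "{}"]) apply (simp add: matching_in_def)
  done

lemma pair:
  assumes sg: "simple_graph V E" and P: "is_PMAS V E w x"
    and u: "u \<in> V" and v: "v \<in> V" and uv: "u \<noteq> v" and e: "{u,v} \<in> E"
  shows "x {u,v} u + x {u,v} v \<ge> w {u,v} \<and> x {u,v} u \<ge> 0 \<and> x {u,v} v \<ge> 0"
proof -
  have fE: "finite E" using finE[OF sg] .
  have eff: "\<And>S. S \<subseteq> V \<Longrightarrow> S \<noteq> {} \<Longrightarrow> (\<Sum>i\<in>S. x S i) = gamma E w S"
    and mono: "\<And>S T i. S \<noteq> {} \<Longrightarrow> S \<subseteq> T \<Longrightarrow> T \<subseteq> V \<Longrightarrow> i \<in> S \<Longrightarrow> x S i \<le> x T i"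
    using P unfolding is_PMAS_def by blast+
  have 1: "x {u,v} u + x {u,v} v = gamma E w {u,v}"
    using eff[of "{u,v}"] u v uv by simp
  have 2: "gamma E w {u,v} \<ge> w {u,v}"
    using gamma_ge[OF fE, of "{u,v}" "{{u,v}}" w] e by (simp add: matching_in_def)
  have s: "\<And>a. a \<in> V \<Longrightarrow> x {a} a \<ge> 0"
  proof -
    fix a assume "a \<in> V"
    thus "x {a} a \<ge> 0" using eff[of "{a}"] gamma_nonneg[OF fE, of w "{a}"] by simp
  qed
  have 3: "x {u} u \<le> x {u,v} u" by (rule mono) (use u v in auto)
  have 4: "x {v} v \<le> x {u,v} v" by (rule mono) (use u v in auto)
  show ?thesis using 1 2 3 4 s[OF u] s[OF v] by linarith
qed

lemma triple:
  assumes sg: "simple_graph V E" and P: "is_PMAS V E w x"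
    and u: "u \<in> V" and v: "v \<in> V" and z: "z \<in> V"
    and d: "u \<noteq> v" "v \<noteq> z" "u \<noteq> z"
    and e1: "{u,v} \<in> E" and e2: "{v,z} \<in> E" and ne: "{u,z} \<notin> E"
    and wpos: "\<forall>e\<in>E. w e > 0"
  shows "x {u,v} u + max (x {u,v} v) (x {v,z} v) + x {v,z} z \<le> max (w {u,v}) (w {v,z})"
proof -
  have fE: "finite E" using finE[OF sg] .
  have eff: "\<And>S. S \<subseteq> V \<Longrightarrow> S \<noteq> {} \<Longrightarrow> (\<Sum>i\<in>S. x S i) = gamma E w S"
    and mono: "\<And>S T i. S \<noteq> {} \<Longrightarrow> S \<subseteq> T \<Longrightarrow> T \<subseteq> V \<Longrightarrow> i \<in> S \<Longrightarrow> x S i \<le> x T i"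
    using P unfolding is_PMAS_def by blast+
  have g: "gamma E w {u,v,z} \<le> max (w {u,v}) (w {v,z})"
  proof (rule gamma_le[OF fE])
    fix M assume m: "matching_in E {u,v,z} M"
    have sub: "M \<subseteq> {{u,v},{v,z}}"
    proof
      fix e assume "e \<in> M"
      hence "e \<in> E" "e \<subseteq> {u,v,z}" using m unfolding matching_in_def by auto
      obtain a b where ab0: "e = {a,b}" "a \<noteq> b"
        using sg \<open>e \<in> E\<close> unfolding simple_graph_def by meson
      have ab34: "a \<in> {u,v,z}" "b \<in> {u,v,z}" using ab0(1) \<open>e \<subseteq> {u,v,z}\<close> by auto
      have cs: "(a=u \<or> a=v \<or> a=z)" "(b=u \<or> b=v \<or> b=z)" using ab34 by auto
      show "e \<in> {{u,v},{v,z}}"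
        using cs ab0 \<open>e \<in> E\<close> ne by (elim disjE) (simp_all add: insert_commute)
    qed
    have nb: "\<not> ({u,v} \<in> M \<and> {v,z} \<in> M)"
    proof
      assume both: "{u,v} \<in> M \<and> {v,z} \<in> M"
      have neq: "{u,v} \<noteq> {v,z}" using d by (auto simp: doubleton_eq_iff)
      have disj: "\<forall>e\<in>M. \<forall>f\<in>M. e \<noteq> f \<longrightarrow> e \<inter> f = {}" using m unfolding matching_in_def by simp
      have "{u,v} \<inter> {v,z} = {}" using disj both neq by simp
      thus False by blast
    qed
    have pw: "w {u,v} > 0" "w {v,z} > 0" using wpos e1 e2 by auto
    show "sum w M \<le> max (w {u,v}) (w {v,z})"
    proof (cases "{u,v} \<in> M")
      case True
      hence "{v,z} \<notin> M" using nb by simp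
      hence "M \<subseteq> {{u,v}}" using sub by auto
      hence "M = {{u,v}}" using True by auto
      thus ?thesis by simp
    next
      case False
      hence "M \<subseteq> {{v,z}}" using sub by auto
      hence "M = {} \<or> M = {{v,z}}" by auto
      thus ?thesis using pw by auto
    qed
  qed
  have T: "x {u,v,z} u + x {u,v,z} v + x {u,v,z} z = gamma E w {u,v,z}"
    using eff[of "{u,v,z}"] u v z d by (simp add: algebra_simps)
  have m1: "x {u,v} u \<le> x {u,v,z} u" by (rule mono) (use u v z in auto)
  have m2: "x {u,v} v \<le> x {u,v,z} v" by (rule mono) (use u v z in auto)
  have m3: "x {v,z} v \<le> x {u,v,z} v" by (rule mono) (use u v z in auto)
  have m4: "x {v,z} z \<le> x {u,v,z} z" by (rule mono) (use u v z in auto)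
  show ?thesis using g T m1 m2 m3 m4 by linarith
qed

lemma arith5:
  fixes sA sB tA tB rA rB uA uB a b c d :: real
  assumes "sA + sB \<ge> a" "tA+tB \<ge> b" "rA+rB \<ge> c" "uA+uB \<ge> d"
   "sA \<ge> 0" "sB \<ge> 0" "tA \<ge> 0" "tB \<ge> 0" "rA \<ge> 0" "rB \<ge> 0" "uA \<ge> 0" "uB \<ge> 0"
   "a > 0" "b > 0" "c > 0" "d > 0"
   "sA + max sB tA + tB \<le> max a b"
   "tA + max tB rA + rB \<le> max b c"
   "rA + max rB uA + uB \<le> max c d"
  shows False
  using assms unfolding max_def by (auto split: if_splits)

lemma core:
  assumes sg: "simple_graph V E" and wpos: "\<forall>e\<in>E. w e > 0" and P: "is_PMAS V E w x"
    and vs: "v0 \<in> V" "v1 \<in> V" "v2 \<in> V" "v3 \<in> V" "v4 \<in> V"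
    and dist: "distinct [v0,v1,v2,v3,v4]"
    and e: "{v0,v1} \<in> E" "{v1,v2} \<in> E" "{v2,v3} \<in> E" "{v3,v4} \<in> E"
    and ne: "{v0,v2} \<notin> E" "{v1,v3} \<notin> E" "{v2,v4} \<notin> E"
  shows False
proof -
  note p01 = pair[OF sg P vs(1) vs(2) _ e(1)]
  note p12 = pair[OF sg P vs(2) vs(3) _ e(2)]
  note p23 = pair[OF sg P vs(3) vs(4) _ e(3)]
  note p34 = pair[OF sg P vs(4) vs(5) _ e(4)]
  note t1 = triple[OF sg P vs(1) vs(2) vs(3) _ _ _ e(1) e(2) ne(1) wpos]
  note t2 = triple[OF sg P vs(2) vs(3) vs(4) _ _ _ e(2) e(3) ne(2) wpos]
  note t3 = triple[OF sg P vs(3) vs(4) vs(5) _ _ _ e(3) e(4) ne(3) wpos]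
  have pos: "w {v0,v1} > 0" "w {v1,v2} > 0" "w {v2,v3} > 0" "w {v3,v4} > 0"
    using wpos e by auto
  have d: "v0 \<noteq> v1" "v1 \<noteq> v2" "v2 \<noteq> v3" "v3 \<noteq> v4" "v0 \<noteq> v2" "v1 \<noteq> v3" "v2 \<noteq> v4"
    using dist by auto
  show False
    apply (rule arith5[where sA="x {v0,v1} v0" and sB="x {v0,v1} v1" and tA="x {v1,v2} v1" and tB="x {v1,v2} v2"
       and rA="x {v2,v3} v2" and rB="x {v2,v3} v3" and uA="x {v3,v4} v3" and uB="x {v3,v4} v4"
       and a="w {v0,v1}" and b="w {v1,v2}" and c="w {v2,v3}" and d="w {v3,v4}"])
    using p01[OF d(1)] p12[OF d(2)] p23[OF d(3)] p34[OF d(4)] pos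
      t1[OF d(1) d(2) d(5)] t2[OF d(2) d(3) d(6)] t3[OF d(3) d(4) d(7)]
    by blast+
qed

theorem mainTheorem10:
  fixes V :: "'a set" and E :: "'a set set" and w :: "'a set \<Rightarrow> real"
  assumes "simple_graph V E"
    and "\<forall>e\<in>E. w e > 0"
    and "population_monotonic V E w"
  shows "\<not> has_induced_copy V E {0..<5::nat} P5_edges \<and> \<not> has_induced_copy V E {0..<5::nat} C5_edges"
proof -
  obtain x where P: "is_PMAS V E w x" using assms(3) unfolding population_monotonic_def by blast
  have gen: False if f: "inj_on f {0..<5::nat}" "f ` {0..<5} \<subseteq> V"
    "\<forall>u\<in>{0..<5}. \<forall>v\<in>{0..<5}. {f u, f v} \<in> E \<longleftrightarrow> {u, v} \<in> EH"
    and EH: "{0,1} \<in> EH" "{1,2} \<in> EH" "{2,3} \<in> EH" "{3,4} \<in> EH"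
      "{0,2} \<notin> EH" "{1,3} \<notin> EH" "{2,4} \<notin> EH" for f and EH :: "nat set set"
  proof (rule core[OF assms(1) assms(2) P])
    show "f 0 \<in> V" "f 1 \<in> V" "f 2 \<in> V" "f 3 \<in> V" "f 4 \<in> V" using f(2) by auto
    show "distinct [f 0, f 1, f 2, f 3, f 4]" by (simp add: inj_on_eq_iff[OF f(1)])
    show "{f 0, f 1} \<in> E" "{f 1, f 2} \<in> E" "{f 2, f 3} \<in> E" "{f 3, f 4} \<in> E"
      "{f 0, f 2} \<notin> E" "{f 1, f 3} \<notin> E" "{f 2, f 4} \<notin> E"
      using f(3) EH by auto
  qed
  show ?thesis
  proof
    show "\<not> has_induced_copy V E {0..<5::nat} P5_edges"
    proof
      assume "has_induced_copy V E {0..<5::nat} P5_edges"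
      then obtain f where f: "inj_on f {0..<5::nat}" "f ` {0..<5} \<subseteq> V"
        "\<forall>u\<in>{0..<5}. \<forall>v\<in>{0..<5}. {f u, f v} \<in> E \<longleftrightarrow> {u, v} \<in> P5_edges"
        unfolding has_induced_copy_def by blast
      show False by (rule gen[OF f]) (simp_all add: P5_edges_def doubleton_eq_iff)
    qed
    show "\<not> has_induced_copy V E {0..<5::nat} C5_edges"
    proof
      assume "has_induced_copy V E {0..<5::nat} C5_edges"
      then obtain f where f: "inj_on f {0..<5::nat}" "f ` {0..<5} \<subseteq> V"
        "\<forall>u\<in>{0..<5}. \<forall>v\<in>{0..<5}. {f u, f v} \<in> E \<longleftrightarrow> {u, v} \<in> C5_edges"
        unfolding has_induced_copy_def by blast
      show False by (rule gen[OF f]) (simp_all add: C5_edges_def doubleton_eq_iff)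
    qed
  qed
qed

end
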